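(* For every integer $k\ge 2$, $$\bigl|\zeta(k)-1-h(k)\bigr|=C(k)\le\frac13\left(1+\frac{2}{3k-1}\right)\frac{2^{-3k}}{1-2^{-2k}},$$ where $h(k)=\sum_{n=2}^{\infty}\operatorname{arctanh}(n^{-k})$ and $C(k)=\sum_{n=1}^{\infty}\frac{\zeta(k(2n+1))-1}{2n+1}$. In particular $C(k)=O(2^{-3k})$ as $k\to\infty$.
   Context: $\zeta$ denotes the Riemann zeta function. *)

theory Defs
  imports "HOL-Analysis.Analysis" "HOL-Library.Landau_Symbols"
begin

definition zeta :: "real \<Rightarrow> real" where
  "zeta s = (\<Sum>n. 1 / (real (Suc n)) powr s)"

definition h :: "nat \<Rightarrow> real" where
  "h k = (\<Sum>n. artanh (1 / real (n + 2) ^ k))"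

text \<open>C k = sum over n >= 1 of (zeta (k(2n+1)) - 1)/(2n+1); index shifted n = m + 1.\<close>
definition C :: "nat \<Rightarrow> real" where
  "C k = (\<Sum>m. (zeta (real (k * (2 * m + 3))) - 1) / real (2 * m + 3))"

end

theory Submission
  imports Defs
begin

lemma artanh_series:
  fixes x :: real assumes "0 \<le> x" "x < 1"
  shows "(\<lambda>m. x ^ (2*m+3) / real (2*m+3)) sums (artanh x - x)"
proof -
  have ax: "\<bar>x\<bar> < 1" "\<bar>-x\<bar> < 1" using assms by auto
  have s1: "(\<lambda>n. - ((-x)^n) / of_nat n) sums ln (1 + x)" by (rule ln_series'[OF ax(1)])
  have s2: "(\<lambda>n. - ((x)^n) / of_nat n) sums ln (1 - x)" using ln_series'[OF ax(2)] by simp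
  have "(\<lambda>n. ((- ((-x)^n) / of_nat n) - (- ((x)^n) / of_nat n)) / 2) sums ((ln (1+x) - ln (1-x))/2)"
    by (intro sums_divide sums_diff s1 s2)
  moreover have "artanh x = (ln (1+x) - ln (1-x))/2"
    using assms by (simp add: artanh_def ln_div)
  moreover have "(\<lambda>n. ((- ((-x)^n) / of_nat n) - (- ((x)^n) / of_nat n)) / 2) = (\<lambda>n. (x^n - (-x)^n) / (2 * of_nat n))"
    by (rule ext) (simp add: field_simps diff_divide_distrib)
  ultimately have s3: "(\<lambda>n. (x^n - (-x)^n) / (2 * of_nat n)) sums artanh x"
    by (metis (no_types, lifting) mult.commute nonzero_mult_div_cancel_left zero_neq_numeral)
  define f where "f = (\<lambda>n. (x^n - (-x)^n) / (2 * real n))"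
  have sm: "strict_mono (\<lambda>j::nat. 2*j+1)" by (auto simp: strict_mono_def)
  have z: "f n = 0" if "n \<notin> range (\<lambda>j::nat. 2*j+1)" for n
  proof -
    have "even n" using that by (metis oddE rangeI)
    then show ?thesis by (simp add: f_def)
  qed
  have s3': "f sums artanh x" using s3 by (simp add: f_def)
  have "(\<lambda>j. f (2*j+1)) sums artanh x"
    using sums_mono_reindex[of "\<lambda>j::nat. 2*j+1" f, OF sm z] s3' by blast
  moreover have "(\<lambda>j. f (2*j+1)) = (\<lambda>j. x^(2*j+1) / real (2*j+1))"
    by (rule ext) (simp add: f_def field_simps)
  ultimately have "(\<lambda>j. x^(2*j+1) / real (2*j+1)) sums artanh x"
    by simp
  hence "(\<lambda>j. x^(2*(Suc j)+1) / real (2*(Suc j)+1)) sums (artanh x - x)"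
    by (subst sums_Suc_iff) simp
  moreover have "(\<lambda>j. x^(2*(Suc j)+1) / real (2*(Suc j)+1)) = (\<lambda>m. x ^ (2*m+3) / real (2*m+3))"
    by (rule ext) (simp add: eval_nat_numeral)
  ultimately show ?thesis by simp
qed

lemma zeta_sums:
  assumes "s \<ge> 2"
  shows "(\<lambda>n. 1 / real (n+2) ^ s) sums (zeta (real s) - 1)"
proof -
  have eq: "(\<lambda>n. 1 / (real (Suc n)) powr (real s)) = (\<lambda>n. 1 / real (Suc n) ^ s)"
    by (rule ext) (simp add: powr_realpow)
  have "summable (\<lambda>n. 1 / real (Suc n) ^ s)"
    using inverse_power_summable[of s] assms
    by (subst summable_Suc_iff) (simp add: divide_inverse)
  moreover have "zeta (real s) = (\<Sum>n. 1 / real (Suc n) ^ s)"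
    unfolding zeta_def by (simp only: eq)
  ultimately have "(\<lambda>n. 1 / real (Suc n) ^ s) sums zeta (real s)"
    by (simp add: summable_sums)
  hence "(\<lambda>n. 1 / real (Suc (Suc n)) ^ s) sums (zeta (real s) - 1)"
    by (subst sums_Suc_iff) simp
  thus ?thesis by (simp add: add.commute)
qed

lemma bern_step:
  fixes a :: real and t :: nat
  assumes "a \<ge> 1" "t \<ge> 1"
  shows "1 / (a+1) ^ (t+1) \<le> (1 / a ^ t - 1 / (a+1) ^ t) / real t"
proof (cases "t = 0")
  case True then show ?thesis using assms by simp
next
  case False
  let ?b = "a+1"
  have "(1 + 1/a) ^ t \<ge> 1 + real t * (1/a)"
  proof (rule Bernoulli_inequality)
    have "0 \<le> 1/a" using assms by simp
    thus "-1 \<le> 1/a" by linarith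
  qed
  moreover have "1 + real t * (1/a) \<ge> 1 + real t / ?b"
    using assms by (simp add: frac_le)
  moreover have "1 + 1/a = ?b / a" using assms by (simp add: field_simps)
  ultimately have "(?b / a) ^ t \<ge> 1 + real t / ?b"
    by simp
  hence "?b ^ t / a ^ t \<ge> 1 + real t / ?b" by (simp add: power_divide)
  have apos: "a ^ t > 0" "?b ^ t > 0" using assms by auto
  hence h: "?b ^ t \<ge> a ^ t * (1 + real t / ?b)"
    using \<open>?b ^ t / a ^ t \<ge> 1 + real t / ?b\<close> by (simp add: pos_le_divide_eq mult.commute)
  have m: "?b * (a^t * (1 + real t / ?b)) \<le> ?b * ?b^t"
    by (rule mult_left_mono[OF h]) (use assms in simp)
  have e: "?b * (a^t * (1 + real t / ?b)) = a^t * ?b + real t * a^t"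
    using assms by (simp add: field_simps)
  have "?b ^ (t+1) \<ge> a^t * ?b + real t * a^t"
    using m e by (simp add: mult.commute)
  hence "real t * a^t \<le> ?b * (?b ^ t - a^t)" by (simp add: algebra_simps)
  hence k: "real t * a^t * ?b^t \<le> ?b * (?b ^ t - a^t) * ?b^t"
    using apos by (intro mult_right_mono) auto
  have tpos: "real t > 0" using False by simp
  have r0: "1 / a ^ t - 1 / ?b ^ t = (?b^t - a^t) / (a^t * ?b^t)"
  proof -
    have gen: "\<And>A B::real. A > 0 \<Longrightarrow> B > 0 \<Longrightarrow> 1/A - 1/B = (B-A)/(A*B)"
      by (simp add: field_simps)
    show ?thesis using gen[OF apos] .
  qed
  have r1: "(1 / a ^ t - 1 / ?b ^ t) / real t = (?b^t - a^t) / (real t * a^t * ?b^t)"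
    unfolding r0 by (simp add: divide_divide_eq_left ac_simps)
  have r2: "1 / ?b ^ (t+1) = 1 / (?b * ?b^t)" by simp
  have Zp: "real t * a^t * ?b^t > 0" using apos tpos by simp
  have Xp: "?b * ?b^t > 0" using apos assms by simp
  have k': "real t * a^t * ?b^t \<le> (?b^t - a^t) * (?b * ?b^t)"
    using k by (simp only: mult.assoc mult.commute mult.left_commute)
  have "(real t * a^t * ?b^t) / (?b * ?b^t) \<le> (?b^t - a^t)"
    using k' Xp by (simp only: pos_divide_le_eq)
  hence "1 / (?b * ?b^t) * (real t * a^t * ?b^t) \<le> (?b^t - a^t)" by simp
  hence "1 / (?b * ?b^t) \<le> (?b^t - a^t) / (real t * a^t * ?b^t)"
    using Zp by (simp only: pos_le_divide_eq)
  thus ?thesis using r1 r2 by simp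
qed

lemma zeta_bound:
  assumes "s \<ge> 2"
  shows "zeta (real s) - 1 \<le> (1 + 2 / (real s - 1)) / 2 ^ s"
proof -
  define t where "t = s - 1"
  have st: "s = t + 1" "t \<ge> 1" using assms by (auto simp: t_def)
  define T where "T n = 1 / (real t * real (n+2) ^ t)" for n
  have "T \<longlonglongrightarrow> 0"
  proof -
    have "(\<lambda>n. inverse (real (n + 2))) \<longlonglongrightarrow> 0"
      using LIMSEQ_ignore_initial_segment[OF LIMSEQ_inverse_real_of_nat, of 1] by (simp add: add.commute)
    hence "(\<lambda>n. (1 / real t) * (inverse (real (n + 2))) ^ t) \<longlonglongrightarrow> (1 / real t) * 0 ^ t"
      by (intro tendsto_intros)
    moreover have "(0::real) ^ t = 0" using st by simp
    ultimately show ?thesis unfolding T_def by (simp add: power_inverse divide_inverse)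
  qed
  from telescope_sums[OF this] have tel: "(\<lambda>n. T n - T (Suc n)) sums T 0"
    using sums_minus by fastforce
  have s1: "(\<lambda>n. 1 / real (n+2) ^ s) sums (zeta (real s) - 1)" by (rule zeta_sums[OF assms])
  hence ss: "(\<lambda>n. 1 / real (Suc n+2) ^ s) sums (zeta (real s) - 1 - 1 / 2^s)"
    by (subst sums_Suc_iff) simp
  have ineq: "1 / real (Suc n+2) ^ s \<le> T n - T (Suc n)" for n
  proof -
    have e1: "real (Suc n + 2) = real (n+2) + 1" "real (Suc n + 2) = real (Suc n + 2)" by simp_all
    have "T n - T (Suc n) = (1/real(n+2)^t - 1/(real(n+2)+1)^t)/real t"
      unfolding T_def by (simp add: diff_divide_distrib e1(1) mult.commute del: of_nat_add)
    moreover have "1 / real (Suc n+2) ^ s = 1/(real(n+2)+1)^(t+1)"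
      using st(1) e1(1) by (simp del: of_nat_add)
    ultimately show ?thesis using bern_step[of "real (n+2)" t] st by simp
  qed
  have "zeta (real s) - 1 - 1 / 2^s \<le> T 0"
    by (rule sums_le[OF ineq ss tel])
  also have "T 0 = 2 / (real t * 2 ^ s)" unfolding T_def using st by simp
  finally have f: "zeta (real s) - 1 - 1 / 2^s \<le> 2 / (real t * 2 ^ s)" .
  have "(1 + 2 / (real s - 1)) / 2 ^ s = 1 / 2^s + 2 / (real t * 2 ^ s)"
    using st by (simp add: add_divide_distrib)
  thus ?thesis using f by linarith
qed

lemma powr_conv3: "(2::real) powr (- 3 * real k) = 1 / 2 ^ (3 * k)"
proof -
  have "- 3 * real k = - real (3*k)" by simp
  thus ?thesis by (simp only: powr_minus_divide powr_realpow)
qed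

lemma powr_conv2: "(2::real) powr (- 2 * real k) = 1 / 2 ^ (2 * k)"
proof -
  have "- 2 * real k = - real (2*k)" by simp
  thus ?thesis by (simp only: powr_minus_divide powr_realpow)
qed

lemma main_k:
  fixes k :: nat assumes k: "k \<ge> 2"
  shows "\<bar>zeta (real k) - 1 - h k\<bar> = C k \<and>
         C k \<le> (1/3) * (1 + 2 / (3 * real k - 1)) * ((1 / 2 ^ (3*k)) / (1 - 1 / 2 ^ (2*k)))"
proof -
  define x where "x n = 1 / real (n+2) ^ k" for n
  define a where "a m n = 1 / real (n+2) ^ (k*(2*m+3)) / real (2*m+3)" for m n
  define G where "G m = (zeta (real (k*(2*m+3))) - 1) / real (2*m+3)" for m
  define q :: real where "q = 1 / 2 ^ (2*k)"
  define B :: real where "B = (1 + 2 / (3 * real k - 1)) * (1/3) * (1 / 2 ^ (3*k))"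
  have a_nonneg: "a m n \<ge> 0" for m n by (simp add: a_def)
  have x01: "0 \<le> x n" "x n < 1" for n
  proof -
    show "0 \<le> x n" by (simp add: x_def)
    have "real (n+2) ^ k > 1" using k by (intro one_less_power) auto
    thus "x n < 1" by (simp add: x_def)
  qed
  have xpow: "x n ^ (2*m+3) = 1 / real (n+2) ^ (k*(2*m+3))" for n m
    by (simp add: x_def power_one_over power_mult)
  have row: "(\<lambda>m. a m n) sums (artanh (x n) - x n)" for n
    using artanh_series[OF x01] by (simp add: a_def xpow)
  have col: "(\<lambda>n. a m n) sums G m" for m
  proof -
    have "k*(2*m+3) \<ge> k*1" by (intro mult_le_mono2) auto
    hence "k*(2*m+3) \<ge> 2" using k by linarith
    from sums_divide[OF zeta_sums[OF this], of "real (2*m+3)"]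
    show ?thesis by (simp add: a_def G_def)
  qed
  have G_nonneg: "G m \<ge> 0" for m
  proof -
    have "summable (a m)" "suminf (a m) = G m" using col[of m] by (auto simp: sums_iff)
    thus ?thesis using suminf_nonneg[of "a m"] a_nonneg by auto
  qed
  have G_le: "G m \<le> B * q ^ m" for m
  proof -
    define s where "s = k*(2*m+3)"
    have "k*3 \<le> k*(2*m+3)" by (intro mult_le_mono2) auto
    hence s3: "s \<ge> 3*k" unfolding s_def by (simp add: mult.commute)
    hence s2: "s \<ge> 2" using k by linarith
    have zb: "zeta (real s) - 1 \<le> (1 + 2 / (real s - 1)) / 2 ^ s" by (rule zeta_bound[OF s2])
    have gm: "G m = (zeta (real s) - 1) / real (2*m+3)" unfolding G_def s_def by (rule refl)
    have "0 \<le> (zeta (real s) - 1) / real (2*m+3)" using G_nonneg[of m] gm by simp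
    hence z0: "zeta (real s) - 1 \<ge> 0" by (simp add: zero_le_divide_iff)
    have rs: "real s - 1 \<ge> 3 * real k - 1" using s3 by linarith
    have pk: "3 * real k - 1 > 0" using k by simp
    have f1: "2 / (real s - 1) \<le> 2 / (3 * real k - 1)"
      using rs pk by (intro divide_left_mono) auto
    have p2: "(2::real) ^ s = 2 ^ (3*k) * (2 ^ (2*k)) ^ m"
    proof -
      have "s = 3*k + 2*k*m" unfolding s_def by (simp add: algebra_simps)
      thus ?thesis by (simp add: power_add power_mult)
    qed
    have G3: "G m \<le> (zeta (real s) - 1) / 3"
      unfolding gm using z0 by (intro divide_left_mono) auto
    also have "\<dots> \<le> ((1 + 2 / (real s - 1)) / 2 ^ s) / 3"
      using zb by (intro divide_right_mono) auto
    also have "\<dots> \<le> ((1 + 2 / (3 * real k - 1)) / 2 ^ s) / 3"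
      using f1 by (intro divide_right_mono) auto
    also have "\<dots> = B * q ^ m"
      unfolding B_def q_def p2 by (simp add: power_one_over)
    finally show ?thesis .
  qed
  have qlt: "0 \<le> q" "q < 1" using k by (auto simp: q_def)
  have geo: "(\<lambda>m. B * q ^ m) sums (B * (1 / (1 - q)))"
    using geometric_sums[of q] qlt by (intro sums_mult) auto
  have Gsum: "summable G"
    using G_nonneg G_le geo by (intro summable_comparison_test[of G "\<lambda>m. B * q^m"]) (auto simp: sums_iff)
  have Ck: "C k = suminf G" unfolding C_def G_def by (rule refl)
  have Cbound: "C k \<le> B * (1 / (1 - q))"
    unfolding Ck by (rule sums_le[OF G_le summable_sums[OF Gsum] geo])
  have Cnonneg: "C k \<ge> 0" unfolding Ck by (rule suminf_nonneg[OF Gsum G_nonneg])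
  define F where "F p = a (fst p) (snd p)" for p
  have Fnn: "F p \<ge> 0" for p by (simp add: F_def a_nonneg)
  have inner1: "((\<lambda>n. F (m, n)) has_sum G m) UNIV" for m
  proof -
    have "(\<lambda>n. F (m, n)) = a m" by (simp add: F_def)
    thus ?thesis using sums_nonneg_imp_has_sum[OF col[of m] a_nonneg] by simp
  qed
  have Ghs: "(G has_sum C k) UNIV"
    unfolding Ck by (rule sums_nonneg_imp_has_sum[OF summable_sums[OF Gsum] G_nonneg])
  have Gso: "G summable_on UNIV" using Ghs by (auto simp: has_sum_iff)
  have Fsum: "F summable_on (UNIV \<times> UNIV)"
    using summable_on_SigmaI[where A=UNIV and B="\<lambda>_. UNIV" and f=F and g=G, OF inner1 Gso Fnn] by simp
  have Fhs: "(F has_sum C k) (UNIV \<times> UNIV)"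
    using has_sum_SigmaI[where A=UNIV and B="\<lambda>_. UNIV" and f=F and g=G, OF inner1 Ghs] Fsum by simp
  hence Fhs': "((\<lambda>(x,y). F (y,x)) has_sum C k) (UNIV \<times> UNIV)"
    by (subst (asm) has_sum_swap)
  have inner2: "((\<lambda>m. (\<lambda>(x,y). F (y,x)) (n, m)) has_sum (artanh (x n) - x n)) UNIV" for n
  proof -
    have "(\<lambda>m. (\<lambda>(x,y). F (y,x)) (n, m)) = (\<lambda>m. a m n)" by (simp add: F_def)
    thus ?thesis using sums_nonneg_imp_has_sum[OF row[of n] a_nonneg] by simp
  qed
  have "((\<lambda>n. artanh (x n) - x n) has_sum C k) UNIV"
    using has_sum_SigmaD[where f="\<lambda>(x,y). F (y,x)" and S="C k" and A=UNIV and B="\<lambda>_. UNIV", OF _ inner2] Fhs' by simp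
  hence d: "(\<lambda>n. artanh (x n) - x n) sums C k" by (rule has_sum_imp_sums)
  have xs: "x sums (zeta (real k) - 1)" unfolding x_def by (rule zeta_sums[OF k])
  have "(\<lambda>n. (artanh (x n) - x n) + x n) sums (C k + (zeta (real k) - 1))"
    by (rule sums_add[OF d xs])
  hence "(\<lambda>n. artanh (x n)) sums (C k + (zeta (real k) - 1))" by simp
  hence "h k = C k + (zeta (real k) - 1)" unfolding h_def x_def by (simp add: sums_iff)
  hence e1: "\<bar>zeta (real k) - 1 - h k\<bar> = C k" using Cnonneg by simp
  have "B * (1 / (1 - q)) = (1/3) * (1 + 2 / (3 * real k - 1)) * ((1 / 2 ^ (3*k)) / (1 - 1 / 2 ^ (2*k)))"
    by (simp add: B_def q_def)
  thus ?thesis using e1 Cbound by simp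
qed

theorem theorem5p2:
  shows "(\<forall>k::nat. k \<ge> 2 \<longrightarrow>
            \<bar>zeta (real k) - 1 - h k\<bar> = C k \<and>
            C k \<le> (1/3) * (1 + 2 / (3 * real k - 1)) * (2 powr (- 3 * real k) / (1 - 2 powr (- 2 * real k))))
         \<and> C \<in> O(\<lambda>k. 2 powr (- 3 * real k))"
proof
  show "\<forall>k::nat. k \<ge> 2 \<longrightarrow>
            \<bar>zeta (real k) - 1 - h k\<bar> = C k \<and>
            C k \<le> (1/3) * (1 + 2 / (3 * real k - 1)) * (2 powr (- 3 * real k) / (1 - 2 powr (- 2 * real k)))"
    using main_k unfolding powr_conv3 powr_conv2 by blast
  show "C \<in> O(\<lambda>k. 2 powr (- 3 * real k))"
  proof (rule bigoI[where c = "4/3"])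
    show "eventually (\<lambda>k. norm (C k) \<le> 4/3 * norm ((2::real) powr (- 3 * real k))) at_top"
      unfolding eventually_at_top_linorder
    proof (intro exI allI impI)
      fix k :: nat assume k: "k \<ge> 2"
      have c1: "C k \<ge> 0" using main_k[OF k] by (metis abs_ge_zero)
      have c2: "C k \<le> (1/3) * (1 + 2 / (3 * real k - 1)) * ((1 / 2 ^ (3*k)) / (1 - 1 / 2 ^ (2*k)))"
        using main_k[OF k] by blast
      define p :: real where "p = 1 / 2 ^ (3*k)"
      define r :: real where "r = 1 / 2 ^ (2*k)"
      have p0: "p > 0" by (simp add: p_def)
      have "(2::real) ^ (2*k) \<ge> 2 ^ 1" by (intro power_increasing) (use k in auto)
      hence r2: "r \<le> 1/2" unfolding r_def by (simp add: divide_simps)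
      have r0: "r \<ge> 0" by (simp add: r_def)
      have e1: "1 + 2 / (3 * real k - 1) \<le> 2"
      proof -
        have "3 * real k - 1 \<ge> 2" using k by simp
        hence "2 / (3 * real k - 1) \<le> 1" by simp
        thus ?thesis by simp
      qed
      have e2: "p / (1 - r) \<le> 2 * p"
        using r2 p0 by (simp add: divide_simps)
      have e3: "0 \<le> p / (1 - r)" using r2 p0 by simp
      have e4: "0 \<le> 1 + 2 / (3 * real k - 1)"
      proof -
        have "3 * real k - 1 \<ge> 0" using k by simp
        thus ?thesis by simp
      qed
      have "C k \<le> (1/3) * (1 + 2 / (3 * real k - 1)) * (p / (1 - r))"
        using c2 by (simp add: p_def r_def)
      also have "\<dots> \<le> (1/3) * 2 * (2 * p)"
        using e1 e2 e3 e4 by (intro mult_mono) auto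
      also have "\<dots> = 4/3 * p" by simp
      finally have "C k \<le> 4/3 * p" .
      moreover have "norm ((2::real) powr (- 3 * real k)) = p"
        unfolding powr_conv3 p_def by simp
      ultimately show "norm (C k) \<le> 4/3 * norm ((2::real) powr (- 3 * real k))"
        using c1 by simp
    qed
  qed
qed


end
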